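(* Let $X_\lambda$ be a cellular multipointed $d$-space. A continuous map $[0,1]\to|X_\lambda|$ is a directed path of $\vec{\mathrm{Sp}}(X_\lambda)$ if and only if it is of the form $\gamma\phi$ where $\gamma$ is an execution path of $X_\lambda$ or a constant path, and $\phi\in\mathcal{I}(1)$.
   Context: $\mathcal{M}(\ell,\ell')$: non-decreasing surjective continuous maps $[0,\ell]\to[0,\ell']$; $\mathcal{I}(\ell)$: non-decreasing continuous maps $[0,1]\to[0,\ell]$ (constants allowed); $\mu_\ell(t)=t/\ell$ for $\ell>0$. Moore composition $*$ concatenates a path $[0,\ell_1]\to U$ and a path $[0,\ell_2]\to U$ into a path $[0,\ell_1+\ell_2]\to U$; normalized composition of $\gamma_1,\gamma_2:[0,1]\to U$ is $(\gamma_1\mu_{1/2})*(\gamma_2\mu_{1/2})$. A multipointed $d$-space is $(|X|,X^0,\mathbb{P}^{\mathrm{top}}X)$: a space, a set of states $X^0\subset|X|$, a set of continuous maps $[0,1]\to|X|$ (execution paths) with endpoints in $X^0$, closed under precomposition by $\mathcal{M}(1,1)$ and normalized composition. $\vec{\mathrm{Sp}}(X)$ is the directed space with underlying space $|X|$ whose directed paths are all constant paths and all Moore compositions $(\gamma_1\phi_1\mu_{\ell_1})*\dots*(\gamma_n\phi_n\mu_{\ell_n})$ with $n\ge1$, $\ell_i>0$, $\sum\ell_i=1$, $\gamma_i$ execution paths of $X$, $\phi_i\in\mathcal{I}(1)$. For a space $Z$, $\mathrm{Glob}^{\mathrm{top}}(Z)$ is the multipointed $d$-space with underlying space the quotient of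 $\{0,1\}\sqcup Z\times[0,1]$ by $(z,0)\sim0$, $(z,1)\sim1$, states $\{0,1\}$, execution paths $\delta_z\phi$ ($z\in Z$, $\phi\in\mathcal{M}(1,1)$, $\delta_z(t)=(z,t)$). $\mathbf{D}^n$, $\mathbf{S}^{n-1}$: closed $n$-disk and its boundary ($\mathbf{D}^0$ a point, $\mathbf{S}^{-1}=\varnothing$). A cellular multipointed $d$-space is $X_\lambda=\varinjlim_{\nu<\lambda}X_\nu$ for a colimit-preserving functor $\nu\mapsto X_\nu$ on an ordinal $\lambda$ with $X_0=(X^0,X^0,\varnothing)$ and each $X_\nu\to X_{\nu+1}$ a pushout of $\mathrm{Glob}^{\mathrm{top}}(\mathbf{S}^{n_\nu-1})\to\mathrm{Glob}^{\mathrm{top}}(\mathbf{D}^{n_\nu})$ (induced by inclusion) along some $g_\nu$, $n_\nu\ge0$. *)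

theory Defs
  imports "HOL-Analysis.Analysis"
begin

definition Mrep :: "real \<Rightarrow> real \<Rightarrow> (real \<Rightarrow> real) set" where
  "Mrep l l' = {\<phi>. continuous_on {0..l} \<phi> \<and> mono_on {0..l} \<phi> \<and> \<phi> ` {0..l} = {0..l'}}"

definition Irep :: "real \<Rightarrow> (real \<Rightarrow> real) set" where
  "Irep l = {\<phi>. continuous_on {0..1} \<phi> \<and> mono_on {0..1} \<phi> \<and> \<phi> ` {0..1} \<subseteq> {0..l}}"

text \<open>A Moore path is a pair (l, f) with f a path on [0,l]. The Moore composition of
  a list of Moore paths is a path on [0, sum of lengths].\<close>
fun moore :: "(real \<times> (real \<Rightarrow> 'a)) list \<Rightarrow> real \<Rightarrow> 'a" where
  "moore [] t = undefined"
| "moore [(l, f)] t = f t"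
| "moore ((l, f) # rest) t = (if t \<le> l then f t else moore rest (t - l))"

fun moore_composable :: "(real \<times> (real \<Rightarrow> 'a)) list \<Rightarrow> bool" where
  "moore_composable ((l, f) # (l', g) # rest) = (f l = g 0 \<and> moore_composable ((l', g) # rest))"
| "moore_composable _ = True"

definition norm_comp :: "(real \<Rightarrow> 'a) \<Rightarrow> (real \<Rightarrow> 'a) \<Rightarrow> real \<Rightarrow> 'a" where
  "norm_comp g1 g2 = moore [(1/2, \<lambda>t. g1 (t / (1/2))), (1/2, \<lambda>t. g2 (t / (1/2)))]"

text \<open>A multipointed d-space (|X|, X^0, P^top X). Paths are functions real => 'a, of
  which only the restriction to [0,1] is meaningful.\<close>
record 'a mdspace =
  mds_top :: "'a topology"
  mds_states :: "'a set"
  mds_paths :: "(real \<Rightarrow> 'a) set"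

text \<open>Closure of a set of paths under precomposition by M(1,1), normalized composition,
  and (representation artefact) change of values outside [0,1]. This is the set of
  execution paths of a colimit of multipointed d-spaces.\<close>
inductive_set gen_paths :: "(real \<Rightarrow> 'a) set \<Rightarrow> (real \<Rightarrow> 'a) set" for Q where
  base: "\<gamma> \<in> Q \<Longrightarrow> \<gamma> \<in> gen_paths Q"
| reparam: "\<gamma> \<in> gen_paths Q \<Longrightarrow> \<phi> \<in> Mrep 1 1 \<Longrightarrow> \<gamma> \<circ> \<phi> \<in> gen_paths Q"
| comp: "\<gamma>1 \<in> gen_paths Q \<Longrightarrow> \<gamma>2 \<in> gen_paths Q \<Longrightarrow> \<gamma>1 1 = \<gamma>2 0 \<Longrightarrow>
          norm_comp \<gamma>1 \<gamma>2 \<in> gen_paths Q"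
| ext: "\<gamma> \<in> gen_paths Q \<Longrightarrow> (\<forall>t\<in>{0..1}. \<delta> t = \<gamma> t) \<Longrightarrow> \<delta> \<in> gen_paths Q"

definition disk :: "nat \<Rightarrow> (nat \<Rightarrow> real) set" where
  "disk n = {x \<in> topspace (Euclidean_space n). (\<Sum>i<n. x i ^ 2) \<le> 1}"

definition sphere_set :: "nat \<Rightarrow> (nat \<Rightarrow> real) set" where
  "sphere_set n = {x \<in> topspace (Euclidean_space n). (\<Sum>i<n. x i ^ 2) = 1}"

text \<open>Y' is the pushout of Glob(S^{n-1}) -> Glob(D^n) along g : Glob(S^{n-1}) -> Y, with
  Y -> Y' realised as an inclusion. The map Glob(D^n) -> Y' is described by
  Phi : D^n x [0,1] -> Y' (constant on D^n x {0} and on D^n x {1}); g is its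
  restriction to the quotient of {0,1} + S^{n-1} x [0,1].\<close>
definition cell_attach :: "'a mdspace \<Rightarrow> 'a mdspace \<Rightarrow> nat \<Rightarrow> ((nat \<Rightarrow> real) \<times> real \<Rightarrow> 'a) \<Rightarrow> bool" where
  "cell_attach Y Y' n \<Phi> \<longleftrightarrow>
     \<comment> \<open>g is a morphism Glob(S^{n-1}) -> Y\<close>
     (\<exists>a\<in>mds_states Y. \<exists>b\<in>mds_states Y. \<forall>z\<in>disk n. \<Phi> (z, 0) = a \<and> \<Phi> (z, 1) = b)
   \<and> continuous_map (prod_topology (subtopology (Euclidean_space n) (sphere_set n)) (top_of_set {0..1}))
        (mds_top Y) \<Phi>
   \<and> (\<forall>z\<in>sphere_set n. \<forall>\<phi>\<in>Mrep 1 1. (\<lambda>t. \<Phi> (z, \<phi> t)) \<in> mds_paths Y)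
     \<comment> \<open>underlying set of the pushout\<close>
   \<and> topspace (mds_top Y') = topspace (mds_top Y) \<union> \<Phi> ` (disk n \<times> {0..1})
   \<and> inj_on \<Phi> ((disk n - sphere_set n) \<times> {0<..<1})
   \<and> \<Phi> ` ((disk n - sphere_set n) \<times> {0<..<1}) \<inter> topspace (mds_top Y) = {}
     \<comment> \<open>topology of the pushout (final topology)\<close>
   \<and> (\<forall>A. openin (mds_top Y') A \<longleftrightarrow>
          A \<subseteq> topspace (mds_top Y')
        \<and> openin (mds_top Y) (A \<inter> topspace (mds_top Y))
        \<and> openin (prod_topology (subtopology (Euclidean_space n) (disk n)) (top_of_set {0..1}))
                 {p \<in> disk n \<times> {0..1}. \<Phi> p \<in> A})
     \<comment> \<open>states and execution paths of the pushout\<close>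
   \<and> mds_states Y' = mds_states Y
   \<and> mds_paths Y' = gen_paths (mds_paths Y \<union>
        {(\<lambda>t. \<Phi> (z, \<phi> t)) | z \<phi>. z \<in> disk n \<and> \<phi> \<in> Mrep 1 1})"

definition is_chain_colimit :: "('i::wellorder \<Rightarrow> 'a mdspace) \<Rightarrow> 'i \<Rightarrow> bool" where
  "is_chain_colimit X \<nu> \<longleftrightarrow>
     topspace (mds_top (X \<nu>)) = (\<Union>\<mu>\<in>{\<mu>. \<mu> < \<nu>}. topspace (mds_top (X \<mu>)))
   \<and> (\<forall>A. openin (mds_top (X \<nu>)) A \<longleftrightarrow>
          A \<subseteq> topspace (mds_top (X \<nu>))
        \<and> (\<forall>\<mu><\<nu>. openin (mds_top (X \<mu>)) (A \<inter> topspace (mds_top (X \<mu>)))))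
   \<and> mds_states (X \<nu>) = (\<Union>\<mu>\<in>{\<mu>. \<mu> < \<nu>}. mds_states (X \<mu>))
   \<and> mds_paths (X \<nu>) = gen_paths (\<Union>\<mu>\<in>{\<mu>. \<mu> < \<nu>}. mds_paths (X \<mu>))"

text \<open>The cellular multipointed d-space is X lam.\<close>
definition cellular_tower :: "'a set \<Rightarrow> ('i::wellorder \<Rightarrow> 'a mdspace) \<Rightarrow> 'i \<Rightarrow> bool" where
  "cellular_tower S0 X lam \<longleftrightarrow> (\<forall>\<nu>\<le>lam.
     ((\<forall>\<mu>. \<not> \<mu> < \<nu>) \<longrightarrow>
        mds_top (X \<nu>) = discrete_topology S0 \<and> mds_states (X \<nu>) = S0 \<and> mds_paths (X \<nu>) = {})
   \<and> (\<forall>\<mu>. \<mu> < \<nu> \<and> (\<forall>\<kappa>. \<not> (\<mu> < \<kappa> \<and> \<kappa> < \<nu>)) \<longrightarrow>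
        (\<exists>n \<Phi>. cell_attach (X \<mu>) (X \<nu>) n \<Phi>))
   \<and> ((\<exists>\<mu>. \<mu> < \<nu>) \<and> (\<forall>\<mu><\<nu>. \<exists>\<kappa>. \<mu> < \<kappa> \<and> \<kappa> < \<nu>) \<longrightarrow> is_chain_colimit X \<nu>))"

text \<open>Directed paths of Sp(X): constant paths and Moore compositions
  (gamma_1 phi_1 mu_{l_1}) * ... * (gamma_n phi_n mu_{l_n}), n >= 1, l_i > 0, sum l_i = 1.
  Paths are compared on [0,1].\<close>
definition sp_dpath :: "'a mdspace \<Rightarrow> (real \<Rightarrow> 'a) \<Rightarrow> bool" where
  "sp_dpath X p \<longleftrightarrow>
     (\<exists>x\<in>topspace (mds_top X). \<forall>t\<in>{0..1}. p t = x)
   \<or> (\<exists>L :: (real \<times> (real \<Rightarrow> 'a) \<times> (real \<Rightarrow> real)) list.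
        L \<noteq> []
      \<and> (\<forall>(l, \<gamma>, \<phi>)\<in>set L. l > 0 \<and> \<gamma> \<in> mds_paths X \<and> \<phi> \<in> Irep 1)
      \<and> sum_list (map fst L) = 1
      \<and> moore_composable (map (\<lambda>(l, \<gamma>, \<phi>). (l, \<lambda>t. \<gamma> (\<phi> (t / l)))) L)
      \<and> (\<forall>t\<in>{0..1}. p t = moore (map (\<lambda>(l, \<gamma>, \<phi>). (l, \<lambda>t. \<gamma> (\<phi> (t / l)))) L) t))"

end

theory Submission
  imports Defs
begin


fun wp :: "(real \<Rightarrow> 'a) list \<Rightarrow> real \<Rightarrow> 'a" where
  "wp [] s = undefined"
| "wp [e] s = e s"
| "wp (e # f # w) s = (if s \<le> 1 then e s else wp (f # w) (s - 1))"

fun wcomp :: "(real \<Rightarrow> 'a) list \<Rightarrow> bool" where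
  "wcomp (e # f # w) = (e 1 = f 0 \<and> wcomp (f # w))"
| "wcomp _ = True"

lemma wp_Cons: "w \<noteq> [] \<Longrightarrow> wp (e # w) s = (if s \<le> 1 then e s else wp w (s - 1))"
  by (cases w) auto

lemma wp_le1: "w \<noteq> [] \<Longrightarrow> s \<le> 1 \<Longrightarrow> wp w s = hd w s"
  by (cases w; cases "tl w") auto

lemma wp_append: "w1 \<noteq> [] \<Longrightarrow> w2 \<noteq> [] \<Longrightarrow>
  wp (w1 @ w2) s = (if s \<le> real (length w1) then wp w1 s else wp w2 (s - real (length w1)))"
proof (induction w1 arbitrary: s)
  case Nil thus ?case by simp
next
  case (Cons e w1)
  show ?case
  proof (cases "w1 = []")
    case True thus ?thesis using Cons by (simp add: wp_Cons)
  next
    case False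
    thus ?thesis using Cons by (auto simp: wp_Cons algebra_simps)
  qed
qed

lemma wp_cell: "1 \<le> j \<Longrightarrow> j \<le> length w \<Longrightarrow> real j - 1 < s \<Longrightarrow> s \<le> real j \<Longrightarrow>
  wp w s = (w ! (j - 1)) (s - real j + 1)"
proof (induction w arbitrary: j s)
  case Nil thus ?case by simp
next
  case (Cons e w)
  show ?case
  proof (cases "j = 1")
    case True
    then show ?thesis using Cons.prems by (cases "w = []") (auto simp: wp_Cons)
  next
    case False
    then have "w \<noteq> []" "j - 1 \<ge> 1" "j - 1 \<le> length w" using Cons.prems by auto
    moreover have "real (j - 1) - 1 < s - 1" "s - 1 \<le> real (j - 1)" using Cons.prems False by auto
    ultimately have "wp w (s - 1) = (w ! (j - 1 - 1)) (s - 1 - real (j - 1) + 1)"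
      using Cons.IH by blast
    moreover have "s > 1" using Cons.prems False by auto
    moreover have "(e # w) ! (j - 1) = w ! (j - 1 - 1)" using False Cons.prems by (cases j) auto
    moreover have "s - 1 - real (j - 1) + 1 = s - real j + 1" using Cons.prems by auto
    ultimately show ?thesis using \<open>w \<noteq> []\<close> by (simp add: wp_Cons)
  qed
qed

lemma wcomp_iff: "wcomp w \<longleftrightarrow> (\<forall>j. Suc j < length w \<longrightarrow> (w ! j) 1 = (w ! Suc j) 0)"
proof (induction w rule: wcomp.induct)
  case (1 e f w)
  show ?case
    apply (simp only: wcomp.simps 1)
    apply (auto simp: nth_Cons split: nat.splits)
    done
qed auto

lemma wcomp_take: "wcomp w \<Longrightarrow> wcomp (take j w)"
  by (auto simp: wcomp_iff)

lemma wcomp_drop: "wcomp w \<Longrightarrow> wcomp (drop j w)"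
  by (auto simp: wcomp_iff)

lemma wcomp_append: "w1 \<noteq> [] \<Longrightarrow> w2 \<noteq> [] \<Longrightarrow> wcomp w1 \<Longrightarrow> wcomp w2 \<Longrightarrow> last w1 1 = hd w2 0 \<Longrightarrow>
  wcomp (w1 @ w2)"
proof (induction w1 rule: wcomp.induct)
  case (1 e f w)
  then show ?case by auto
next
  case ("2_1") thus ?case by simp
next
  case ("2_2" e)
  then show ?case by (cases w2) auto
qed

lemma wp_int: "1 \<le> j \<Longrightarrow> j \<le> length w \<Longrightarrow> wp w (real j) = (w ! (j - 1)) 1"
  using wp_cell[of j w "real j"] by simp

lemma wp_int0: "wcomp w \<Longrightarrow> j < length w \<Longrightarrow> wp w (real j) = (w ! j) 0"
proof (cases j)
  case 0
  assume "j < length w"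
  then show ?thesis using 0 wp_le1[of w 0] by (cases w) auto
next
  case (Suc k)
  assume "wcomp w" "j < length w"
  then show ?thesis using Suc wp_int[of j w] wcomp_iff[of w] by auto
qed

lemma wp_take: "1 \<le> j \<Longrightarrow> j \<le> length w1 \<Longrightarrow> s \<le> real j \<Longrightarrow>
   wp (take j w1 @ r) s = wp w1 s"
proof -
  assume a: "1 \<le> j" "j \<le> length w1" "s \<le> real j"
  have t: "take j w1 \<noteq> []" using a by auto
  have "wp (take j w1 @ r) s = wp (take j w1) s"
    using wp_append[OF t, of r s] a by (cases "r = []") auto
  also have "\<dots> = wp w1 s"
  proof (cases "drop j w1 = []")
    case True then show ?thesis by simp
  next
    case False
    have "wp w1 s = wp (take j w1 @ drop j w1) s" by simp
    also have "\<dots> = wp (take j w1) s" using wp_append[OF t False, of s] a by auto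
    finally show ?thesis by simp
  qed
  finally show ?thesis .
qed

lemma wp_take_gt: "1 \<le> j \<Longrightarrow> j \<le> length w1 \<Longrightarrow> r \<noteq> [] \<Longrightarrow> s > real j \<Longrightarrow>
   wp (take j w1 @ r) s = wp r (s - real j)"
proof -
  assume a: "1 \<le> j" "j \<le> length w1" "r \<noteq> []" "s > real j"
  have t: "take j w1 \<noteq> []" using a by auto
  show ?thesis using wp_append[OF t a(3), of s] a by auto
qed

lemma wp_drop: "j < length w \<Longrightarrow> s > 0 \<Longrightarrow> wp (drop j w) s = wp w (s + real j)"
proof (cases "j = 0")
  case True then show ?thesis by simp
next
  case False
  assume a: "j < length w" "s > 0"
  have "wp w (s + real j) = wp (take j w @ drop j w) (s + real j)" by simp
  also have "\<dots> = wp (drop j w) s" using wp_take_gt[of j w "drop j w" "s + real j"] a False by auto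
  finally show ?thesis by simp
qed



definition succ_of :: "'i::wellorder \<Rightarrow> 'i \<Rightarrow> bool" where
  "succ_of \<mu> \<nu> \<longleftrightarrow> \<mu> < \<nu> \<and> (\<forall>\<kappa>. \<not> (\<mu> < \<kappa> \<and> \<kappa> < \<nu>))"

definition cellN :: "('i::wellorder \<Rightarrow> 'a mdspace) \<Rightarrow> 'i \<Rightarrow> 'i \<Rightarrow> nat" where
  "cellN X \<mu> \<nu> = fst (SOME nP. cell_attach (X \<mu>) (X \<nu>) (fst nP) (snd nP))"

definition cellP :: "('i::wellorder \<Rightarrow> 'a mdspace) \<Rightarrow> 'i \<Rightarrow> 'i \<Rightarrow> (nat \<Rightarrow> real) \<times> real \<Rightarrow> 'a" where
  "cellP X \<mu> \<nu> = snd (SOME nP. cell_attach (X \<mu>) (X \<nu>) (fst nP) (snd nP))"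

lemma attD0:
  assumes "cell_attach Y Y' n P"
  shows "\<exists>a\<in>mds_states Y. \<exists>b\<in>mds_states Y. \<forall>z\<in>disk n. P (z, 0) = a \<and> P (z, 1) = b"
    and "\<forall>z\<in>sphere_set n. \<forall>\<phi>\<in>Mrep 1 1. (\<lambda>t. P (z, \<phi> t)) \<in> mds_paths Y"
    and "topspace (mds_top Y') = topspace (mds_top Y) \<union> P ` (disk n \<times> {0..1})"
    and "inj_on P ((disk n - sphere_set n) \<times> {0<..<1})"
    and "P ` ((disk n - sphere_set n) \<times> {0<..<1}) \<inter> topspace (mds_top Y) = {}"
    and "mds_states Y' = mds_states Y"
    and "mds_paths Y' = gen_paths (mds_paths Y \<union>
        {(\<lambda>t. P (z, \<phi> t)) | z \<phi>. z \<in> disk n \<and> \<phi> \<in> Mrep 1 1})"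
  using assms unfolding cell_attach_def
  apply -
  apply (elim conjE, assumption)+
  done

lemmas attD = attD0

lemma tri: "(\<forall>\<mu>. \<not> \<mu> < (\<nu>::'i::wellorder)) \<or> (\<exists>\<mu>. succ_of \<mu> \<nu>) \<or>
   ((\<exists>\<mu>. \<mu> < \<nu>) \<and> (\<forall>\<mu><\<nu>. \<exists>\<kappa>. \<mu> < \<kappa> \<and> \<kappa> < \<nu>))"
  unfolding succ_of_def by blast

lemma succ_le: "succ_of \<mu> \<nu> \<Longrightarrow> \<kappa> < \<nu> \<Longrightarrow> \<kappa> \<le> \<mu>"
  unfolding succ_of_def using not_le by blast

lemma succ_uniq: "succ_of \<mu> \<nu> \<Longrightarrow> succ_of \<mu>' \<nu> \<Longrightarrow> \<mu> = \<mu>'"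
  by (meson antisym succ_le succ_of_def)

locale ctow =
  fixes S0 :: "'a set" and X :: "'i::wellorder \<Rightarrow> 'a mdspace" and lam :: 'i
  assumes tw: "cellular_tower S0 X lam"
begin

lemma base: "\<nu> \<le> lam \<Longrightarrow> \<forall>\<mu>. \<not> \<mu> < \<nu> \<Longrightarrow>
   mds_top (X \<nu>) = discrete_topology S0 \<and> mds_states (X \<nu>) = S0 \<and> mds_paths (X \<nu>) = {}"
  using tw[unfolded cellular_tower_def, rule_format, of \<nu>] by fast

lemma att: "\<nu> \<le> lam \<Longrightarrow> succ_of \<mu> \<nu> \<Longrightarrow> cell_attach (X \<mu>) (X \<nu>) (cellN X \<mu> \<nu>) (cellP X \<mu> \<nu>)"
proof -
  assume a: "\<nu> \<le> lam" "succ_of \<mu> \<nu>"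
  then have "\<exists>n P. cell_attach (X \<mu>) (X \<nu>) n P"
    using tw[unfolded cellular_tower_def, rule_format, of \<nu>] unfolding succ_of_def by fast
  then have "\<exists>nP. cell_attach (X \<mu>) (X \<nu>) (fst nP) (snd nP)" by auto
  from someI_ex[OF this] show ?thesis unfolding cellN_def cellP_def .
qed

lemma lim: "\<nu> \<le> lam \<Longrightarrow> \<exists>\<mu>. \<mu> < \<nu> \<Longrightarrow> \<forall>\<mu><\<nu>. \<exists>\<kappa>. \<mu> < \<kappa> \<and> \<kappa> < \<nu> \<Longrightarrow> is_chain_colimit X \<nu>"
  using tw[unfolded cellular_tower_def, rule_format, of \<nu>] by fast

lemma top_mono: "\<nu> \<le> lam \<Longrightarrow> \<mu> \<le> \<nu> \<Longrightarrow> topspace (mds_top (X \<mu>)) \<subseteq> topspace (mds_top (X \<nu>))"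
proof (induction \<nu> arbitrary: \<mu> rule: less_induct)
  case (less \<nu>)
  show ?case
  proof (cases "\<mu> = \<nu>")
    case True then show ?thesis by simp
  next
    case False
    then have lt: "\<mu> < \<nu>" using less.prems by simp
    consider (b) "\<forall>\<mu>. \<not> \<mu> < \<nu>" | (s) \<kappa> where "succ_of \<kappa> \<nu>"
      | (l) "(\<exists>\<mu>. \<mu> < \<nu>) \<and> (\<forall>\<mu><\<nu>. \<exists>\<kappa>. \<mu> < \<kappa> \<and> \<kappa> < \<nu>)" using tri by blast
    then show ?thesis
    proof cases
      case b then show ?thesis using lt by blast
    next
      case s
      have "\<mu> \<le> \<kappa>" using succ_le[OF s lt] .
      moreover have "\<kappa> < \<nu>" using s succ_of_def by blast
      ultimately have "topspace (mds_top (X \<mu>)) \<subseteq> topspace (mds_top (X \<kappa>))"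
        using less by auto
      moreover have "topspace (mds_top (X \<kappa>)) \<subseteq> topspace (mds_top (X \<nu>))"
        using attD(3)[OF att[OF less.prems(1) s]] by blast
      ultimately show ?thesis by blast
    next
      case l
      then have "is_chain_colimit X \<nu>" using lim less.prems by blast
      then show ?thesis using lt unfolding is_chain_colimit_def by blast
    qed
  qed
qed

lemma paths_mono: "\<nu> \<le> lam \<Longrightarrow> \<mu> \<le> \<nu> \<Longrightarrow> mds_paths (X \<mu>) \<subseteq> mds_paths (X \<nu>)"
proof (induction \<nu> arbitrary: \<mu> rule: less_induct)
  case (less \<nu>)
  show ?case
  proof (cases "\<mu> = \<nu>")
    case True then show ?thesis by simp
  next
    case False
    then have lt: "\<mu> < \<nu>" using less.prems by simp
    consider (b) "\<forall>\<mu>. \<not> \<mu> < \<nu>" | (s) \<kappa> where "succ_of \<kappa> \<nu>"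
      | (l) "(\<exists>\<mu>. \<mu> < \<nu>) \<and> (\<forall>\<mu><\<nu>. \<exists>\<kappa>. \<mu> < \<kappa> \<and> \<kappa> < \<nu>)" using tri by blast
    then show ?thesis
    proof cases
      case b then show ?thesis using lt by blast
    next
      case s
      have "\<mu> \<le> \<kappa>" using succ_le[OF s lt] .
      moreover have "\<kappa> < \<nu>" using s succ_of_def by blast
      ultimately have "mds_paths (X \<mu>) \<subseteq> mds_paths (X \<kappa>)"
        using less by auto
      moreover have "mds_paths (X \<kappa>) \<subseteq> mds_paths (X \<nu>)"
        using attD(7)[OF att[OF less.prems(1) s]] by (auto intro: gen_paths.base)
      ultimately show ?thesis by blast
    next
      case l
      then have "is_chain_colimit X \<nu>" using lim less.prems by blast
      then show ?thesis using lt unfolding is_chain_colimit_def by (auto intro: gen_paths.base)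
    qed
  qed
qed

lemma states_eq: "\<nu> \<le> lam \<Longrightarrow> mds_states (X \<nu>) = S0 \<and> S0 \<subseteq> topspace (mds_top (X \<nu>))"
proof (induction \<nu> rule: less_induct)
  case (less \<nu>)
  consider (b) "\<forall>\<mu>. \<not> \<mu> < \<nu>" | (s) \<kappa> where "succ_of \<kappa> \<nu>"
    | (l) "(\<exists>\<mu>. \<mu> < \<nu>) \<and> (\<forall>\<mu><\<nu>. \<exists>\<kappa>. \<mu> < \<kappa> \<and> \<kappa> < \<nu>)" using tri by blast
  then show ?case
  proof cases
    case b then show ?thesis using base[OF less.prems] by simp
  next
    case s
    have k: "\<kappa> < \<nu>" using s succ_of_def by blast
    then have "mds_states (X \<kappa>) = S0 \<and> S0 \<subseteq> topspace (mds_top (X \<kappa>))" using less by auto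
    then show ?thesis using attD(3,6)[OF att[OF less.prems(1) s]] by auto
  next
    case l
    then have c: "is_chain_colimit X \<nu>" using lim less.prems by blast
    have "\<forall>\<mu><\<nu>. mds_states (X \<mu>) = S0 \<and> S0 \<subseteq> topspace (mds_top (X \<mu>))" using less by auto
    then show ?thesis using c l unfolding is_chain_colimit_def by auto
  qed
qed

lemma paths_gen: "\<nu> \<le> lam \<Longrightarrow> mds_paths (X \<nu>) = {} \<or> (\<exists>Q. mds_paths (X \<nu>) = gen_paths Q)"
proof -
  assume a: "\<nu> \<le> lam"
  consider (b) "\<forall>\<mu>. \<not> \<mu> < \<nu>" | (s) \<kappa> where "succ_of \<kappa> \<nu>"
    | (l) "(\<exists>\<mu>. \<mu> < \<nu>) \<and> (\<forall>\<mu><\<nu>. \<exists>\<kappa>. \<mu> < \<kappa> \<and> \<kappa> < \<nu>)" using tri by blast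
  then show ?thesis
  proof cases
    case b then show ?thesis using base[OF a] by simp
  next
    case s then show ?thesis using attD(7)[OF att[OF a s]] by blast
  next
    case l
    then have "is_chain_colimit X \<nu>" using lim[OF a] by blast
    then have "mds_paths (X \<nu>) = gen_paths (\<Union>\<mu>\<in>{\<mu>. \<mu> < \<nu>}. mds_paths (X \<mu>))"
      unfolding is_chain_colimit_def by (elim conjE)
    then show ?thesis by blast
  qed
qed

lemma paths_reparam: "\<gamma> \<in> mds_paths (X lam) \<Longrightarrow> \<phi> \<in> Mrep 1 1 \<Longrightarrow> \<gamma> \<circ> \<phi> \<in> mds_paths (X lam)"
proof -
  assume a: "\<gamma> \<in> mds_paths (X lam)" "\<phi> \<in> Mrep 1 1"
  then obtain Q where "mds_paths (X lam) = gen_paths Q" using paths_gen[of lam] by auto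
  then show ?thesis using a gen_paths.reparam by metis
qed

lemma paths_comp: "\<gamma>1 \<in> mds_paths (X lam) \<Longrightarrow> \<gamma>2 \<in> mds_paths (X lam) \<Longrightarrow> \<gamma>1 1 = \<gamma>2 0 \<Longrightarrow>
   norm_comp \<gamma>1 \<gamma>2 \<in> mds_paths (X lam)"
proof -
  assume a: "\<gamma>1 \<in> mds_paths (X lam)" "\<gamma>2 \<in> mds_paths (X lam)" "\<gamma>1 1 = \<gamma>2 0"
  then obtain Q where "mds_paths (X lam) = gen_paths Q" using paths_gen[of lam] by auto
  then show ?thesis using a gen_paths.comp by metis
qed

definition Elem :: "(real \<Rightarrow> 'a) set" where
  "Elem = {e. \<exists>\<mu> \<nu> z. succ_of \<mu> \<nu> \<and> \<nu> \<le> lam \<and> z \<in> disk (cellN X \<mu> \<nu>) - sphere_set (cellN X \<mu> \<nu>)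
             \<and> e = (\<lambda>s. cellP X \<mu> \<nu> (z, s))}"

lemma Elem_ends: "e \<in> Elem \<Longrightarrow> e 0 \<in> S0 \<and> e 1 \<in> S0"
proof -
  assume "e \<in> Elem"
  then obtain \<mu> \<nu> z where s: "succ_of \<mu> \<nu>" "\<nu> \<le> lam" and z: "z \<in> disk (cellN X \<mu> \<nu>)"
     and e: "e = (\<lambda>s. cellP X \<mu> \<nu> (z, s))" unfolding Elem_def by blast
  have "\<mu> \<le> lam" using s unfolding succ_of_def by auto
  obtain a b where ab: "a \<in> mds_states (X \<mu>)" "b \<in> mds_states (X \<mu>)"
    "\<forall>z\<in>disk (cellN X \<mu> \<nu>). cellP X \<mu> \<nu> (z, 0) = a \<and> cellP X \<mu> \<nu> (z, 1) = b"
    using attD(1)[OF att[OF s(2,1)]] by blast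
  have "mds_states (X \<mu>) = S0" using states_eq \<open>\<mu> \<le> lam\<close> by blast
  then show ?thesis using ab z e by simp
qed

lemma Elem_int: "e \<in> Elem \<Longrightarrow> 0 < s \<Longrightarrow> s < 1 \<Longrightarrow> e s \<notin> S0"
proof -
  assume "e \<in> Elem" and s01: "0 < s" "s < 1"
  then obtain \<mu> \<nu> z where s: "succ_of \<mu> \<nu>" "\<nu> \<le> lam" and z: "z \<in> disk (cellN X \<mu> \<nu>) - sphere_set (cellN X \<mu> \<nu>)"
     and e: "e = (\<lambda>s. cellP X \<mu> \<nu> (z, s))" unfolding Elem_def by blast
  have "\<mu> \<le> lam" using s unfolding succ_of_def by auto
  then have "S0 \<subseteq> topspace (mds_top (X \<mu>))" using states_eq by blast
  moreover have "cellP X \<mu> \<nu> (z, s) \<in> cellP X \<mu> \<nu> ` ((disk (cellN X \<mu> \<nu>) - sphere_set (cellN X \<mu> \<nu>)) \<times> {0<..<1})"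
    using z s01 by auto
  ultimately show ?thesis using attD(5)[OF att[OF s(2,1)]] e by blast
qed


lemma Elem_inj: "e \<in> Elem \<Longrightarrow> e' \<in> Elem \<Longrightarrow> 0 < s \<Longrightarrow> s < 1 \<Longrightarrow> 0 < s' \<Longrightarrow> s' < 1 \<Longrightarrow>
   e s = e' s' \<Longrightarrow> e = e' \<and> s = s'"
proof -
  assume "e \<in> Elem" "e' \<in> Elem" and ss: "0 < s" "s < 1" "0 < s'" "s' < 1" and eq: "e s = e' s'"
  then obtain \<mu> \<nu> z where s: "succ_of \<mu> \<nu>" "\<nu> \<le> lam" and z: "z \<in> disk (cellN X \<mu> \<nu>) - sphere_set (cellN X \<mu> \<nu>)"
     and e: "e = (\<lambda>s. cellP X \<mu> \<nu> (z, s))" unfolding Elem_def by blast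
  obtain \<mu>' \<nu>' z' where s': "succ_of \<mu>' \<nu>'" "\<nu>' \<le> lam" and z': "z' \<in> disk (cellN X \<mu>' \<nu>') - sphere_set (cellN X \<mu>' \<nu>')"
     and e': "e' = (\<lambda>s. cellP X \<mu>' \<nu>' (z', s))" using \<open>e' \<in> Elem\<close> unfolding Elem_def by blast
  have sep: False if A: "succ_of \<mu> \<nu>" "\<nu> \<le> lam" "z \<in> disk (cellN X \<mu> \<nu>) - sphere_set (cellN X \<mu> \<nu>)"
       "succ_of \<mu>' \<nu>'" "\<nu>' \<le> lam" "z' \<in> disk (cellN X \<mu>' \<nu>') - sphere_set (cellN X \<mu>' \<nu>')"
       "\<nu>' < \<nu>" "cellP X \<mu> \<nu> (z, s) = cellP X \<mu>' \<nu>' (z', s')"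
       "0 < s" "s < 1" "0 < s'" "s' < 1"
     for \<mu> \<nu> z \<mu>' \<nu>' z' s s'
  proof -
    have "\<nu>' \<le> \<mu>" using succ_le[OF A(1) A(7)] .
    moreover have "\<mu> \<le> lam" using A unfolding succ_of_def by auto
    ultimately have "topspace (mds_top (X \<nu>')) \<subseteq> topspace (mds_top (X \<mu>))" using top_mono by blast
    moreover have "cellP X \<mu>' \<nu>' (z', s') \<in> topspace (mds_top (X \<nu>'))"
      using attD(3)[OF att[OF A(5,4)]] A by auto
    moreover have "cellP X \<mu> \<nu> (z, s) \<in> cellP X \<mu> \<nu> ` ((disk (cellN X \<mu> \<nu>) - sphere_set (cellN X \<mu> \<nu>)) \<times> {0<..<1})"
      using A(3,9,10) by (intro imageI) auto
    then have "cellP X \<mu> \<nu> (z, s) \<notin> topspace (mds_top (X \<mu>))"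
      using attD(5)[OF att[OF A(2,1)]] by blast
    ultimately show False using A by auto
  qed
  have "\<nu> = \<nu>'"
  proof (rule ccontr)
    assume "\<nu> \<noteq> \<nu>'"
    then consider "\<nu>' < \<nu>" | "\<nu> < \<nu>'" by (meson linorder_neqE)
    then show False
    proof cases
      case 1 then show ?thesis using sep[of \<mu> \<nu> z \<mu>' \<nu>' z' s s'] s s' z z' eq e e' ss by auto
    next
      case 2 then show ?thesis using sep[of \<mu>' \<nu>' z' \<mu> \<nu> z s' s] s s' z z' eq e e' ss by auto
    qed
  qed
  then have "\<mu> = \<mu>'" using succ_uniq s s' by blast
  then have "(z, s) = (z', s')"
    using attD(4)[OF att[OF s(2,1)]] z z' eq e e' ss \<open>\<nu> = \<nu>'\<close> unfolding inj_on_def by auto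
  then show ?thesis using e e' \<open>\<mu> = \<mu>'\<close> \<open>\<nu> = \<nu>'\<close> by auto
qed

lemma Elem_path: "e \<in> Elem \<Longrightarrow> e \<in> mds_paths (X lam)"
proof -
  assume "e \<in> Elem"
  then obtain \<mu> \<nu> z where s: "succ_of \<mu> \<nu>" "\<nu> \<le> lam" and z: "z \<in> disk (cellN X \<mu> \<nu>) - sphere_set (cellN X \<mu> \<nu>)"
     and e: "e = (\<lambda>s. cellP X \<mu> \<nu> (z, s))" unfolding Elem_def by blast
  have "id \<in> Mrep 1 1" unfolding Mrep_def by (auto intro: continuous_on_id mono_onI)
  then have "e \<in> mds_paths (X \<nu>)" using attD(7)[OF att[OF s(2,1)]] z e
    by (force intro: gen_paths.base)
  then show ?thesis using paths_mono[OF order.refl s(2)] by blast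
qed

end


lemma mrep_ends: "\<Gamma> \<in> Mrep 1 m \<Longrightarrow> \<Gamma> 0 = 0 \<and> \<Gamma> 1 = m"
proof -
  assume a: "\<Gamma> \<in> Mrep 1 m"
  then have im: "\<Gamma> ` {0..1} = {0..m}" and mo: "mono_on {0..1} \<Gamma>" unfolding Mrep_def by auto
  have "\<Gamma> 0 \<in> {0..m}" using im by auto
  then have m0: "0 \<le> m" by auto
  obtain t0 where "t0 \<in> {0..1}" "\<Gamma> t0 = 0" using im m0 by (metis atLeastAtMost_iff imageE order_refl)
  then have "\<Gamma> 0 \<le> 0" using mo by (metis atLeastAtMost_iff mono_onD order_refl zero_le_one)
  moreover obtain t1 where "t1 \<in> {0..1}" "\<Gamma> t1 = m" using im m0 by (metis atLeastAtMost_iff imageE order_refl)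
  then have "m \<le> \<Gamma> 1" using mo by (metis atLeastAtMost_iff mono_onD order_refl zero_le_one)
  moreover have "\<Gamma> 1 \<in> {0..m}" using im by auto
  ultimately show ?thesis using \<open>\<Gamma> 0 \<in> {0..m}\<close> by auto
qed

lemma mrep_intro: "continuous_on {0..1} f \<Longrightarrow> mono_on {0..1} f \<Longrightarrow> f 0 = 0 \<Longrightarrow> f 1 = m \<Longrightarrow> f \<in> Mrep 1 m"
proof -
  assume c: "continuous_on {0..1} f" and mo: "mono_on {0..1} f" and e: "f 0 = 0" "f 1 = m"
  have "f ` {0..1} \<subseteq> {0..m}"
  proof
    fix y assume "y \<in> f ` {0..1}"
    then obtain t where t: "t \<in> {0..1}" "y = f t" by auto
    then have "f 0 \<le> f t" "f t \<le> f 1" using mo by (auto intro: mono_onD)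
    then show "y \<in> {0..m}" using e t by auto
  qed
  moreover have "{0..m} \<subseteq> f ` {0..1}"
  proof
    fix y assume "y \<in> {0..(m::real)}"
    then obtain t where "0 \<le> t" "t \<le> 1" "f t = y" using IVT'[of f 0 y 1] c e by auto
    then show "y \<in> f ` {0..1}" by auto
  qed
  ultimately show ?thesis unfolding Mrep_def using c mo by auto
qed

lemma cont_paste:
  fixes f g :: "real \<Rightarrow> real"
  assumes "continuous_on {0..a} f" "continuous_on {0..b} g" "f a = g 0" "0 \<le> a"
  shows "continuous_on {0..a+b} (\<lambda>t. if t \<le> a then f t else g (t - a))"
proof (rule continuous_on_cases_le[where h = "\<lambda>t. t"])
  show "continuous_on {t \<in> {0..a + b}. t \<le> a} f"
    by (rule continuous_on_subset[OF assms(1)]) auto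
  show "continuous_on {t \<in> {0..a + b}. a \<le> t} (\<lambda>t. g (t - a))"
    by (rule continuous_on_compose2[OF assms(2)]) (auto intro!: continuous_intros)
qed (auto intro: continuous_intros simp: assms)

lemma mono_paste:
  fixes f g :: "real \<Rightarrow> real"
  assumes "mono_on {0..a} f" "mono_on {0..b} g" "f a \<le> g 0" "0 \<le> a"
  shows "mono_on {0..a+b} (\<lambda>t. if t \<le> a then f t else g (t - a))"
proof (rule mono_onI)
  fix r s assume rs: "r \<in> {0..a+b}" "s \<in> {0..a+b}" "r \<le> s"
  show "(if r \<le> a then f r else g (r - a)) \<le> (if s \<le> a then f s else g (s - a))"
  proof (cases "s \<le> a")
    case True then show ?thesis using rs by (auto intro: mono_onD[OF assms(1)])
  next
    case False
    show ?thesis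
    proof (cases "r \<le> a")
      case True
      then have "f r \<le> f a" using rs by (auto intro: mono_onD[OF assms(1)])
      moreover have "g 0 \<le> g (s - a)" using rs False by (auto intro: mono_onD[OF assms(2)])
      ultimately show ?thesis using True False assms(3) by auto
    next
      case F2: False
      then show ?thesis using False rs by (auto intro: mono_onD[OF assms(2)])
    qed
  qed
qed

lemma norm_comp_eq: "norm_comp g1 g2 t = (if t \<le> 1/2 then g1 (2 * t) else g2 (2 * t - 1))"
proof -
  have a: "t / (1/2) = 2 * t" "(t - 1/2) / (1/2) = 2 * t - 1" by (simp_all add: field_simps)
  show ?thesis unfolding norm_comp_def by (simp only: moore.simps a)
qed

definition rep :: "(real \<Rightarrow> 'a) set \<Rightarrow> (real \<Rightarrow> 'a) \<Rightarrow> bool" where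
  "rep E \<gamma> \<longleftrightarrow> (\<exists>w \<Gamma>. w \<noteq> [] \<and> wcomp w \<and> set w \<subseteq> E \<and> \<Gamma> \<in> Mrep 1 (real (length w))
      \<and> (\<forall>t\<in>{0..1}. \<gamma> t = wp w (\<Gamma> t)))"

lemma rep_reparam: "rep E \<gamma> \<Longrightarrow> \<phi> \<in> Mrep 1 1 \<Longrightarrow> rep E (\<gamma> \<circ> \<phi>)"
proof -
  assume "rep E \<gamma>" and ph: "\<phi> \<in> Mrep 1 1"
  then obtain w \<Gamma> where w: "w \<noteq> []" "wcomp w" "set w \<subseteq> E" and G: "\<Gamma> \<in> Mrep 1 (real (length w))"
     and v: "\<forall>t\<in>{0..1}. \<gamma> t = wp w (\<Gamma> t)" unfolding rep_def by blast
  have pc: "continuous_on {0..1} \<phi>" and pm: "mono_on {0..1} \<phi>" and pi: "\<phi> ` {0..1} = {0..1}"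
    using ph unfolding Mrep_def by auto
  have gc: "continuous_on {0..1} \<Gamma>" and gm: "mono_on {0..1} \<Gamma>" using G unfolding Mrep_def by auto
  have "\<Gamma> \<circ> \<phi> \<in> Mrep 1 (real (length w))"
  proof (rule mrep_intro)
    show "continuous_on {0..1} (\<Gamma> \<circ> \<phi>)" using continuous_on_compose[OF pc] gc pi by simp
    show "mono_on {0..1} (\<Gamma> \<circ> \<phi>)"
    proof (rule mono_onI)
      fix r s :: real assume rs: "r \<in> {0..1}" "s \<in> {0..1}" "r \<le> s"
      have "\<phi> r \<le> \<phi> s" using mono_onD[OF pm rs] .
      moreover have "\<phi> r \<in> {0..1}" "\<phi> s \<in> {0..1}" using pi rs by blast+
      ultimately show "(\<Gamma> \<circ> \<phi>) r \<le> (\<Gamma> \<circ> \<phi>) s" using mono_onD[OF gm] by simp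
    qed
    show "(\<Gamma> \<circ> \<phi>) 0 = 0" "(\<Gamma> \<circ> \<phi>) 1 = real (length w)" using mrep_ends[OF G] mrep_ends[OF ph] by auto
  qed
  moreover have "\<forall>t\<in>{0..1}. (\<gamma> \<circ> \<phi>) t = wp w ((\<Gamma> \<circ> \<phi>) t)" using v pi by auto
  ultimately show ?thesis unfolding rep_def using w by blast
qed

lemma rep_ext: "rep E \<gamma> \<Longrightarrow> \<forall>t\<in>{0..1}. \<delta> t = \<gamma> t \<Longrightarrow> rep E \<delta>"
  unfolding rep_def by auto

lemma rep_comp: "rep E \<gamma>1 \<Longrightarrow> rep E \<gamma>2 \<Longrightarrow> \<gamma>1 1 = \<gamma>2 0 \<Longrightarrow> rep E (norm_comp \<gamma>1 \<gamma>2)"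
proof -
  assume r1: "rep E \<gamma>1" and r2: "rep E \<gamma>2" and j: "\<gamma>1 1 = \<gamma>2 0"
  obtain w1 \<Gamma>1 where w1: "w1 \<noteq> []" "wcomp w1" "set w1 \<subseteq> E" and G1: "\<Gamma>1 \<in> Mrep 1 (real (length w1))"
     and v1: "\<forall>t\<in>{0..1}. \<gamma>1 t = wp w1 (\<Gamma>1 t)" using r1 unfolding rep_def by blast
  obtain w2 \<Gamma>2 where w2: "w2 \<noteq> []" "wcomp w2" "set w2 \<subseteq> E" and G2: "\<Gamma>2 \<in> Mrep 1 (real (length w2))"
     and v2: "\<forall>t\<in>{0..1}. \<gamma>2 t = wp w2 (\<Gamma>2 t)" using r2 unfolding rep_def by blast
  define m1 where "m1 = real (length w1)"
  define \<Gamma> where "\<Gamma> = (\<lambda>t. if t \<le> 1/2 then \<Gamma>1 (2 * t) else m1 + \<Gamma>2 (2 * t - 1))"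
  have e1: "\<Gamma>1 0 = 0" "\<Gamma>1 1 = m1" using mrep_ends[OF G1] m1_def by auto
  have e2: "\<Gamma>2 0 = 0" "\<Gamma>2 1 = real (length w2)" using mrep_ends[OF G2] by auto
  have c1: "continuous_on {0..1} \<Gamma>1" and mo1: "mono_on {0..1} \<Gamma>1" and i1: "\<Gamma>1 ` {0..1} = {0..m1}"
    using G1 m1_def unfolding Mrep_def by auto
  have c2: "continuous_on {0..1} \<Gamma>2" and mo2: "mono_on {0..1} \<Gamma>2" and i2: "\<Gamma>2 ` {0..1} = {0..real (length w2)}"
    using G2 unfolding Mrep_def by auto
  have ca: "continuous_on {0..1/2} (\<lambda>t. \<Gamma>1 (2 * t))"
    by (rule continuous_on_compose2[OF c1]) (auto intro!: continuous_intros)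
  have cb: "continuous_on {0..1/2} (\<lambda>t. m1 + \<Gamma>2 (2 * t))"
    by (intro continuous_intros continuous_on_compose2[OF c2]) (auto intro!: continuous_intros)
  have h1: "(1/2::real) + 1/2 = 1" by simp
  have eqG: "(\<lambda>t. if t \<le> 1/2 then \<Gamma>1 (2 * t) else m1 + \<Gamma>2 (2 * (t - 1/2))) = \<Gamma>"
    unfolding \<Gamma>_def by (auto simp: algebra_simps)
  have "continuous_on {0..1/2+1/2} (\<lambda>t. if t \<le> 1/2 then \<Gamma>1 (2 * t) else m1 + \<Gamma>2 (2 * (t - 1/2)))"
    by (rule cont_paste[OF ca cb]) (auto simp: e1 e2)
  then have cG: "continuous_on {0..1} \<Gamma>" by (simp only: h1 eqG)
  have ma: "mono_on {0..1/2} (\<lambda>t. \<Gamma>1 (2 * t))"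
    by (rule mono_onI) (auto intro: mono_onD[OF mo1])
  have mb: "mono_on {0..1/2} (\<lambda>t. m1 + \<Gamma>2 (2 * t))"
    by (rule mono_onI) (auto intro: mono_onD[OF mo2])
  have "mono_on {0..1/2+1/2} (\<lambda>t. if t \<le> 1/2 then \<Gamma>1 (2 * t) else m1 + \<Gamma>2 (2 * (t - 1/2)))"
    by (rule mono_paste[OF ma mb]) (auto simp: e1 e2)
  then have mG: "mono_on {0..1} \<Gamma>" by (simp only: h1 eqG)
  have GM: "\<Gamma> \<in> Mrep 1 (real (length (w1 @ w2)))"
    by (rule mrep_intro[OF cG mG]) (auto simp: \<Gamma>_def e1 e2 m1_def)
  have wc: "wcomp (w1 @ w2)"
  proof (rule wcomp_append[OF w1(1) w2(1) w1(2) w2(2)])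
    have "last w1 = w1 ! (length w1 - 1)" using w1 by (simp add: last_conv_nth)
    then have "last w1 1 = wp w1 m1" using wp_int[of "length w1" w1] w1 m1_def
      by (metis One_nat_def Suc_leI length_greater_0_conv order_refl)
    also have "\<dots> = \<gamma>1 1" using v1 e1 by auto
    also have "\<dots> = \<gamma>2 0" using j .
    also have "\<dots> = wp w2 0" using v2 e2 by auto
    also have "\<dots> = hd w2 0" using wp_le1[OF w2(1)] by auto
    finally show "last w1 1 = hd w2 0" .
  qed
  have "\<forall>t\<in>{0..1}. norm_comp \<gamma>1 \<gamma>2 t = wp (w1 @ w2) (\<Gamma> t)"
  proof
    fix t :: real assume t: "t \<in> {0..1}"
    show "norm_comp \<gamma>1 \<gamma>2 t = wp (w1 @ w2) (\<Gamma> t)"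
    proof (cases "t \<le> 1/2")
      case True
      then have "\<Gamma>1 (2 * t) \<in> {0..m1}" using i1 t by auto
      then show ?thesis using True t v1 w1 w2 by (auto simp: norm_comp_eq \<Gamma>_def wp_append m1_def)
    next
      case False
      have s: "2 * t - 1 \<in> {0..1}" using t False by auto
      show ?thesis
      proof (cases "\<Gamma>2 (2 * t - 1) = 0")
        case True
        have "norm_comp \<gamma>1 \<gamma>2 t = \<gamma>2 (2 * t - 1)" using False by (simp add: norm_comp_eq)
        also have "\<dots> = wp w2 0" using v2 s True by auto
        also have "\<dots> = \<gamma>2 0" using v2 e2 by auto
        also have "\<dots> = \<gamma>1 1" using j by simp
        also have "\<dots> = wp w1 m1" using v1 e1 by auto
        also have "\<dots> = wp (w1 @ w2) (\<Gamma> t)" using False True w1 w2 by (simp add: \<Gamma>_def wp_append m1_def)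
        finally show ?thesis .
      next
        case F2: False
        have "\<Gamma>2 (2 * t - 1) \<in> {0..real (length w2)}" using i2 s by auto
        then have "\<Gamma>2 (2 * t - 1) > 0" using F2 by auto
        then show ?thesis using False s v2 w1 w2 by (auto simp: norm_comp_eq \<Gamma>_def wp_append m1_def)
      qed
    qed
  qed
  then show ?thesis unfolding rep_def using GM wc w1 w2 by (intro exI[of _ "w1 @ w2"] exI[of _ \<Gamma>]) auto
qed

lemma rep_gen: "\<gamma> \<in> gen_paths Q \<Longrightarrow> (\<And>q. q \<in> Q \<Longrightarrow> rep E q) \<Longrightarrow> rep E \<gamma>"
proof (induction rule: gen_paths.induct)
  case (base \<gamma>) then show ?case by blast
next
  case (reparam \<gamma> \<phi>) then show ?case using rep_reparam by blast
next
  case (comp \<gamma>1 \<gamma>2) then show ?case using rep_comp by blast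
next
  case (ext \<gamma> \<delta>) then show ?case using rep_ext by blast
qed



context ctow
begin

lemma paths_rep: "\<nu> \<le> lam \<Longrightarrow> \<gamma> \<in> mds_paths (X \<nu>) \<Longrightarrow> rep Elem \<gamma>"
proof (induction \<nu> arbitrary: \<gamma> rule: less_induct)
  case (less \<nu>)
  consider (b) "\<forall>\<mu>. \<not> \<mu> < \<nu>" | (s) \<kappa> where "succ_of \<kappa> \<nu>"
    | (l) "(\<exists>\<mu>. \<mu> < \<nu>) \<and> (\<forall>\<mu><\<nu>. \<exists>\<kappa>. \<mu> < \<kappa> \<and> \<kappa> < \<nu>)" using tri by blast
  then show ?case
  proof cases
    case b then show ?thesis using base[OF less.prems(1)] less.prems by simp
  next
    case s
    have k: "\<kappa> < \<nu>" "\<kappa> \<le> lam" using s less.prems(1) unfolding succ_of_def by auto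
    have IH: "\<And>q. q \<in> mds_paths (X \<kappa>) \<Longrightarrow> rep Elem q" using less.IH k by blast
    note A = att[OF less.prems(1) s]
    show ?thesis
    proof (rule rep_gen)
      show "\<gamma> \<in> gen_paths (mds_paths (X \<kappa>) \<union>
        {(\<lambda>t. cellP X \<kappa> \<nu> (z, \<phi> t)) | z \<phi>. z \<in> disk (cellN X \<kappa> \<nu>) \<and> \<phi> \<in> Mrep 1 1})"
        using attD(7)[OF A] less.prems(2) by simp
    next
      fix q assume "q \<in> mds_paths (X \<kappa>) \<union>
        {(\<lambda>t. cellP X \<kappa> \<nu> (z, \<phi> t)) | z \<phi>. z \<in> disk (cellN X \<kappa> \<nu>) \<and> \<phi> \<in> Mrep 1 1}"
      then consider "q \<in> mds_paths (X \<kappa>)" | z \<phi> where "z \<in> disk (cellN X \<kappa> \<nu>)" "\<phi> \<in> Mrep 1 1"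
        "q = (\<lambda>t. cellP X \<kappa> \<nu> (z, \<phi> t))" by blast
      then show "rep Elem q"
      proof cases
        case 1 then show ?thesis using IH by blast
      next
        case 2
        show ?thesis
        proof (cases "z \<in> sphere_set (cellN X \<kappa> \<nu>)")
          case True
          then have "q \<in> mds_paths (X \<kappa>)" using attD(2)[OF A] 2 by blast
          then show ?thesis using IH by blast
        next
          case False
          define e where "e = (\<lambda>s. cellP X \<kappa> \<nu> (z, s))"
          have "e \<in> Elem" unfolding Elem_def e_def using s less.prems(1) 2 False by blast
          moreover have "\<forall>t\<in>{0..1}. q t = wp [e] (\<phi> t)" using 2 e_def by simp
          ultimately show ?thesis unfolding rep_def using 2 wcomp.simps
            by (intro exI[of _ "[e]"] exI[of _ \<phi>]) auto
        qed
      qed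
    qed
  next
    case l
    then have c: "is_chain_colimit X \<nu>" using lim less.prems(1) by blast
    then have "mds_paths (X \<nu>) = gen_paths (\<Union>\<mu>\<in>{\<mu>. \<mu> < \<nu>}. mds_paths (X \<mu>))"
      unfolding is_chain_colimit_def by (elim conjE)
    then have g: "\<gamma> \<in> gen_paths (\<Union>\<mu>\<in>{\<mu>. \<mu> < \<nu>}. mds_paths (X \<mu>))" using less.prems(2) by simp
    show ?thesis
    proof (rule rep_gen[OF g])
      fix q assume "q \<in> (\<Union>\<mu>\<in>{\<mu>. \<mu> < \<nu>}. mds_paths (X \<mu>))"
      then obtain \<mu> where "\<mu> < \<nu>" "q \<in> mds_paths (X \<mu>)" by blast
      then show "rep Elem q" using less.IH less.prems(1) by (meson order.strict_trans2 order_less_imp_le)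
    qed
  qed
qed

lemma word_path: "w \<noteq> [] \<Longrightarrow> wcomp w \<Longrightarrow> set w \<subseteq> Elem \<Longrightarrow>
  \<exists>\<gamma>\<in>mds_paths (X lam). \<forall>t\<in>{0..1}. \<gamma> t = wp w (real (length w) * t)"
proof (induction w)
  case Nil then show ?case by simp
next
  case (Cons e w')
  have eE: "e \<in> Elem" using Cons.prems by auto
  show ?case
  proof (cases "w' = []")
    case True
    then show ?thesis using Elem_path[OF eE] by auto
  next
    case False
    have wc': "wcomp w'" using Cons.prems False by (cases w') auto
    have e1: "e 1 = hd w' 0" using Cons.prems False by (cases w') auto
    obtain \<gamma>' where g': "\<gamma>' \<in> mds_paths (X lam)" and v': "\<forall>t\<in>{0..1}. \<gamma>' t = wp w' (real (length w') * t)"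
      using Cons.IH[OF False wc'] Cons.prems by auto
    define M where "M = real (length w')"
    have M: "M \<ge> 1" using False M_def by (cases w') auto
    define a where "a = 1 / (M + 1)"
    have a: "0 < a" "a < 1" using M unfolding a_def by (auto simp: divide_less_eq_1)
    define f where "f = (\<lambda>t::real. (M + 1) * t / 2)"
    define g where "g = (\<lambda>u::real. 1/2 + (M + 1) * u / (2 * M))"
    define \<phi> where "\<phi> = (\<lambda>t. if t \<le> a then f t else g (t - a))"
    have fa: "f a = g 0" using M unfolding f_def g_def a_def by (simp add: field_simps)
    have h1: "a + (1 - a) = 1" by simp
    have "continuous_on {0..a + (1 - a)} \<phi>" unfolding \<phi>_def
    proof (rule cont_paste)
      show "continuous_on {0..a} f" unfolding f_def by (intro continuous_intros) auto
      show "continuous_on {0..1 - a} g" unfolding g_def using M by (intro continuous_intros) auto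
    qed (use fa a in auto)
    then have c\<phi>: "continuous_on {0..1} \<phi>" by (simp only: h1)
    have "mono_on {0..a + (1 - a)} \<phi>" unfolding \<phi>_def
    proof (rule mono_paste)
      show "mono_on {0..a} f" unfolding f_def using M by (intro mono_onI) (auto simp: divide_right_mono)
      show "mono_on {0..1 - a} g" unfolding g_def using M
        by (intro mono_onI) (auto simp: divide_right_mono)
    qed (use fa a in auto)
    then have m\<phi>: "mono_on {0..1} \<phi>" by (simp only: h1)
    have p0: "\<phi> 0 = 0" unfolding \<phi>_def f_def using a by simp
    have e1a: "1 - a = M / (M + 1)" unfolding a_def using M by (simp add: field_simps)
    have "(M + 1) * (M / (M + 1)) / (2 * M) = 1/2" using M by simp
    then have p1: "\<phi> 1 = 1" unfolding \<phi>_def g_def using a e1a by simp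
    have \<phi>M: "\<phi> \<in> Mrep 1 1" by (rule mrep_intro[OF c\<phi> m\<phi> p0 p1])
    have eg: "e \<in> mds_paths (X lam)" using Elem_path[OF eE] .
    have j: "e 1 = \<gamma>' 0" using v' e1 wp_le1[OF False, of 0] by simp
    define \<gamma> where "\<gamma> = norm_comp e \<gamma>' \<circ> \<phi>"
    have "\<gamma> \<in> mds_paths (X lam)" unfolding \<gamma>_def by (rule paths_reparam[OF paths_comp[OF eg g' j] \<phi>M])
    moreover have "\<forall>t\<in>{0..1}. \<gamma> t = wp (e # w') (real (length (e # w')) * t)"
    proof
      fix t :: real assume t: "t \<in> {0..1}"
      have L: "real (length (e # w')) = M + 1" using M_def by simp
      show "\<gamma> t = wp (e # w') (real (length (e # w')) * t)"
      proof (cases "t \<le> a")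
        case True
        have le: "(M + 1) * t \<le> 1" using True M unfolding a_def by (simp add: field_simps)
        have "\<phi> t \<le> 1/2" using True le unfolding \<phi>_def f_def by simp
        then have "\<gamma> t = e (2 * \<phi> t)" unfolding \<gamma>_def by (simp add: norm_comp_eq)
        also have "\<dots> = e ((M + 1) * t)" using True unfolding \<phi>_def f_def by simp
        also have "\<dots> = wp (e # w') ((M + 1) * t)" using le False by (simp add: wp_Cons)
        finally show ?thesis using L by (simp add: add.commute)
      next
        case F: False
        have gt: "(M + 1) * t > 1" using F M unfolding a_def by (simp add: field_simps)
        have ph: "\<phi> t = 1/2 + (M + 1) * (t - a) / (2 * M)" using F unfolding \<phi>_def g_def by simp
        have pos: "(M + 1) * (t - a) / (2 * M) > 0" using F M by (auto intro!: divide_pos_pos mult_pos_pos)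
        have Ma: "(M + 1) * a = 1" unfolding a_def using M by simp
        have "2 * \<phi> t - 1 = (M + 1) * (t - a) / M" using ph M by (simp add: field_simps)
        also have "(M + 1) * (t - a) = (M + 1) * t - 1" using Ma by (simp add: algebra_simps)
        finally have arg: "2 * \<phi> t - 1 = ((M + 1) * t - 1) / M" .
        have "(M + 1) * t \<le> M + 1" using t M by (simp add: mult_left_le)
        then have "((M + 1) * t - 1) / M \<le> 1" using M by (simp add: field_simps)
        moreover have "((M + 1) * t - 1) / M \<ge> 0" using gt M by simp
        ultimately have a01: "2 * \<phi> t - 1 \<in> {0..1}" using arg by simp
        have "\<gamma> t = \<gamma>' (2 * \<phi> t - 1)" unfolding \<gamma>_def using pos ph by (simp add: norm_comp_eq)
        also have "\<dots> = wp w' (M * (2 * \<phi> t - 1))" using v' a01 M_def by simp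
        also have "M * (2 * \<phi> t - 1) = (M + 1) * t - 1" using arg M by simp
        also have "wp w' ((M + 1) * t - 1) = wp (e # w') ((M + 1) * t)" using gt False by (simp add: wp_Cons)
        finally show ?thesis using L by (simp add: add.commute)
      qed
    qed
    ultimately show ?thesis by blast
  qed
qed

end


definition repr :: "(real \<Rightarrow> 'a) set \<Rightarrow> real \<Rightarrow> (real \<Rightarrow> 'a) \<Rightarrow> bool" where
  "repr E l f \<longleftrightarrow> (\<exists>w \<theta>. w \<noteq> [] \<and> wcomp w \<and> set w \<subseteq> E \<and> continuous_on {0..l} \<theta> \<and> mono_on {0..l} \<theta>
     \<and> \<theta> ` {0..l} \<subseteq> {0..real (length w)} \<and> (\<forall>t\<in>{0..l}. f t = wp w (\<theta> t)))"

lemma splice_gen: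
  fixes \<theta>1 \<theta>2 :: "real \<Rightarrow> real"
  assumes l: "l > 0" and L: "L \<ge> 0" and w1: "w1 \<noteq> []" "wcomp w1" and w2: "w2 \<noteq> []" "wcomp w2"
    and c1: "continuous_on {0..l} \<theta>1" and m1: "mono_on {0..l} \<theta>1" and i1: "\<theta>1 ` {0..l} \<subseteq> {0..real (length w1)}"
    and c2: "continuous_on {0..L} \<theta>2" and m2: "mono_on {0..L} \<theta>2" and i2: "\<theta>2 ` {0..L} \<subseteq> {0..real (length w2)}"
    and j1: "1 \<le> j1" "j1 \<le> length w1" and j2: "j2 \<le> length w2"
    and d: "\<theta>1 l - real j1 = \<theta>2 0 - real j2" and s1le: "\<theta>1 l \<le> real j1"
    and x: "wp w1 (real j1) = wp w2 (real j2)"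
    and alt: "\<theta>1 l = real j1 \<or> (1 \<le> j2 \<and> real j1 - 1 < \<theta>1 l \<and> w1 ! (j1 - 1) = w2 ! (j2 - 1))"
  defines "w \<equiv> take j1 w1 @ drop j2 w2"
    and "\<theta> \<equiv> \<lambda>t. if t \<le> l then \<theta>1 t else \<theta>2 (t - l) + (real j1 - real j2)"
  shows "w \<noteq> [] \<and> wcomp w \<and> set w \<subseteq> set w1 \<union> set w2 \<and> continuous_on {0..l+L} \<theta> \<and> mono_on {0..l+L} \<theta>
    \<and> \<theta> ` {0..l+L} \<subseteq> {0..real (length w)}
    \<and> (\<forall>t\<in>{0..l+L}. wp w (\<theta> t) = (if t \<le> l then wp w1 (\<theta>1 t) else wp w2 (\<theta>2 (t - l))))"
proof -
  have tk: "take j1 w1 \<noteq> []" using j1 w1 by auto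
  have lw: "real (length w) = real j1 + real (length w2) - real j2" unfolding w_def using j1 j2 by auto
  have ne: "w \<noteq> []" unfolding w_def using tk by simp
  have sub: "set w \<subseteq> set w1 \<union> set w2" unfolding w_def using set_take_subset[of j1 w1] set_drop_subset[of j2 w2] by auto
  have wc: "wcomp w"
  proof (cases "drop j2 w2 = []")
    case True then show ?thesis unfolding w_def using wcomp_take[OF w1(2)] by simp
  next
    case False
    then have j2l: "j2 < length w2" by simp
    have "last (take j1 w1) = w1 ! (j1 - 1)" using tk j1 by (simp add: last_conv_nth min_def)
    then have "last (take j1 w1) 1 = wp w1 (real j1)" using wp_int[OF j1] by simp
    also have "\<dots> = wp w2 (real j2)" using x .
    also have "\<dots> = (w2 ! j2) 0" using wp_int0[OF w2(2) j2l] .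
    also have "\<dots> = hd (drop j2 w2) 0" using j2l by (simp add: hd_drop_conv_nth)
    finally show ?thesis unfolding w_def
      by (rule wcomp_append[OF tk False wcomp_take[OF w1(2)] wcomp_drop[OF w2(2)]])
  qed
  have c2': "continuous_on {0..L} (\<lambda>u. \<theta>2 u + (real j1 - real j2))" using c2 by (intro continuous_intros)
  have cont: "continuous_on {0..l+L} \<theta>" unfolding \<theta>_def
    by (rule cont_paste[OF c1 c2']) (use d l in auto)
  have m2': "mono_on {0..L} (\<lambda>u. \<theta>2 u + (real j1 - real j2))"
  proof (rule mono_onI)
    fix r s assume "r \<in> {0..L}" "s \<in> {0..L}" "r \<le> s"
    then show "\<theta>2 r + (real j1 - real j2) \<le> \<theta>2 s + (real j1 - real j2)" using mono_onD[OF m2] by simp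
  qed
  have mono: "mono_on {0..l+L} \<theta>" unfolding \<theta>_def
    by (rule mono_paste[OF m1 m2']) (use d l in auto)
  have lo1: "\<And>t. t \<in> {0..l} \<Longrightarrow> 0 \<le> \<theta>1 t \<and> \<theta>1 t \<le> \<theta>1 l"
  proof -
    fix t assume t: "t \<in> {0..l}"
    have "\<theta>1 t \<in> {0..real (length w1)}" using i1 t by blast
    moreover have "\<theta>1 t \<le> \<theta>1 l" using mono_onD[OF m1 t] t l by auto
    ultimately show "0 \<le> \<theta>1 t \<and> \<theta>1 t \<le> \<theta>1 l" by auto
  qed
  have lo2: "\<And>u. u \<in> {0..L} \<Longrightarrow> \<theta>2 0 \<le> \<theta>2 u \<and> \<theta>2 u \<le> real (length w2)"
  proof -
    fix u assume u: "u \<in> {0..L}"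
    have "\<theta>2 u \<in> {0..real (length w2)}" using i2 u by blast
    moreover have "\<theta>2 0 \<le> \<theta>2 u" using mono_onD[OF m2 _ u] u L by auto
    ultimately show "\<theta>2 0 \<le> \<theta>2 u \<and> \<theta>2 u \<le> real (length w2)" by auto
  qed
  have rng: "\<theta> ` {0..l+L} \<subseteq> {0..real (length w)}"
  proof
    fix y assume "y \<in> \<theta> ` {0..l+L}"
    then obtain t where t: "t \<in> {0..l+L}" "y = \<theta> t" by auto
    show "y \<in> {0..real (length w)}"
    proof (cases "t \<le> l")
      case True
      then have "t \<in> {0..l}" using t by auto
      then show ?thesis using lo1 t True s1le lw j2 unfolding \<theta>_def by fastforce
    next
      case False
      then have "t - l \<in> {0..L}" using t by auto
      from lo2[OF this] have "\<theta>2 0 \<le> \<theta>2 (t - l)" "\<theta>2 (t - l) \<le> real (length w2)" by auto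
      moreover have "0 \<le> \<theta>1 l" using lo1[of l] l by auto
      ultimately show ?thesis using t False d lw unfolding \<theta>_def by auto
    qed
  qed
  have vals: "\<forall>t\<in>{0..l+L}. wp w (\<theta> t) = (if t \<le> l then wp w1 (\<theta>1 t) else wp w2 (\<theta>2 (t - l)))"
  proof
    fix t assume t: "t \<in> {0..l+L}"
    show "wp w (\<theta> t) = (if t \<le> l then wp w1 (\<theta>1 t) else wp w2 (\<theta>2 (t - l)))"
    proof (cases "t \<le> l")
      case True
      then have "t \<in> {0..l}" using t by auto
      then have "\<theta>1 t \<le> real j1" using lo1 s1le by force
      then show ?thesis using True wp_take[OF j1] unfolding \<theta>_def w_def by simp
    next
      case False
      then have u: "t - l \<in> {0..L}" using t by auto
      define \<sigma> where "\<sigma> = \<theta>2 (t - l)"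
      have \<sigma>: "\<theta>2 0 \<le> \<sigma>" "\<sigma> \<le> real (length w2)" using lo2[OF u] \<sigma>_def by auto
      have th: "\<theta> t = \<sigma> + (real j1 - real j2)" unfolding \<theta>_def \<sigma>_def using False by simp
      show ?thesis
      proof (cases "\<sigma> > real j2")
        case True
        then have j2l: "j2 < length w2" using \<sigma> by linarith
        then have dn: "drop j2 w2 \<noteq> []" by simp
        have "wp w (\<theta> t) = wp (drop j2 w2) (\<theta> t - real j1)"
          unfolding w_def using wp_take_gt[OF j1 dn, of "\<theta> t"] th True by simp
        also have "\<dots> = wp w2 (\<theta> t - real j1 + real j2)" using wp_drop[OF j2l, of "\<theta> t - real j1"] th True by simp
        also have "\<theta> t - real j1 + real j2 = \<sigma>" using th by simp
        finally show ?thesis using False \<sigma>_def by simp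
      next
        case F2: False
        then have le: "\<theta> t \<le> real j1" using th by simp
        have "wp w (\<theta> t) = wp w1 (\<theta> t)" unfolding w_def using wp_take[OF j1 le] .
        moreover have "wp w1 (\<theta> t) = wp w2 \<sigma>"
          using alt
        proof
          assume a: "\<theta>1 l = real j1"
          then have "\<sigma> = real j2" using d \<sigma> F2 by simp
          then have "\<theta> t = real j1" using th by simp
          then show ?thesis using x \<open>\<sigma> = real j2\<close> by simp
        next
          assume a: "1 \<le> j2 \<and> real j1 - 1 < \<theta>1 l \<and> w1 ! (j1 - 1) = w2 ! (j2 - 1)"
          have g1: "real j1 - 1 < \<theta> t" using a th d \<sigma> by simp
          have g2: "real j2 - 1 < \<sigma>" using g1 th by simp
          have "wp w1 (\<theta> t) = (w1 ! (j1 - 1)) (\<theta> t - real j1 + 1)" using wp_cell[OF j1 g1 le] .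
          moreover have "wp w2 \<sigma> = (w2 ! (j2 - 1)) (\<sigma> - real j2 + 1)"
            using wp_cell[of j2 w2 \<sigma>] a j2 g2 F2 by simp
          moreover have "\<theta> t - real j1 + 1 = \<sigma> - real j2 + 1" using th by simp
          ultimately show ?thesis using a by simp
        qed
        ultimately show ?thesis using False \<sigma>_def by simp
      qed
    qed
  qed
  show ?thesis using ne wc sub cont mono rng vals by blast
qed


lemma frac_split: "0 \<le> s \<Longrightarrow> s \<le> real m \<Longrightarrow>
  (\<exists>k. k \<le> m \<and> s = real k) \<or> (\<exists>j. 1 \<le> j \<and> j \<le> m \<and> real j - 1 < s \<and> s < real j)"
proof -
  assume s: "0 \<le> s" "s \<le> real m"
  define j where "j = nat \<lceil>s\<rceil>"
  have cj: "real j = of_int \<lceil>s\<rceil>" unfolding j_def using s by simp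
  have a: "of_int \<lceil>s\<rceil> - 1 < s" "s \<le> of_int \<lceil>s\<rceil>" by linarith+
  have jm: "j \<le> m" unfolding j_def using s by (simp add: ceiling_le_iff nat_le_iff)
  show ?thesis
  proof (cases "s = real j")
    case True then show ?thesis using jm by blast
  next
    case False
    then have "s < real j" using a(2) cj by linarith
    moreover have "real j - 1 < s" using a cj by auto
    moreover have "1 \<le> j" using False s cj a by (cases "j = 0") auto
    ultimately show ?thesis using jm by blast
  qed
qed

lemma sum_pos: "xs \<noteq> [] \<Longrightarrow> \<forall>x\<in>set xs. fst x > (0::real) \<Longrightarrow> sum_list (map fst xs) > 0"
proof (induction xs)
  case Nil then show ?case by simp
next
  case (Cons a xs)
  then show ?case by (cases "xs = []") (auto intro: add_pos_pos)
qed

context ctow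
begin

lemma wp_S0: "w \<noteq> [] \<Longrightarrow> set w \<subseteq> Elem \<Longrightarrow> k \<le> length w \<Longrightarrow> wp w (real k) \<in> S0"
proof -
  assume w: "w \<noteq> []" "set w \<subseteq> Elem" "k \<le> length w"
  show ?thesis
  proof (cases "k = 0")
    case True
    have "hd w \<in> Elem" using w by auto
    then show ?thesis using True wp_le1[OF w(1), of 0] Elem_ends by simp
  next
    case False
    have "w ! (k - 1) \<in> Elem" using w False by (auto intro: nth_mem)
    then show ?thesis using wp_int[of k w] w False Elem_ends by simp
  qed
qed

lemma wp_nonint: "set w \<subseteq> Elem \<Longrightarrow> 1 \<le> j \<Longrightarrow> j \<le> length w \<Longrightarrow> real j - 1 < s \<Longrightarrow> s < real j \<Longrightarrow>
  wp w s = (w ! (j - 1)) (s - real j + 1) \<and> wp w s \<notin> S0 \<and> w ! (j - 1) \<in> Elem"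
proof -
  assume a: "set w \<subseteq> Elem" "1 \<le> j" "j \<le> length w" "real j - 1 < s" "s < real j"
  have e: "wp w s = (w ! (j - 1)) (s - real j + 1)" using wp_cell[of j w s] a by simp
  have "w ! (j - 1) \<in> Elem" using a by (auto intro: nth_mem)
  moreover have "(w ! (j - 1)) (s - real j + 1) \<notin> S0" using Elem_int[OF calculation] a by simp
  ultimately show ?thesis using e by simp
qed

lemma splice:
  assumes l: "l > 0" and L: "L > 0" and rf: "repr Elem l f" and rg: "repr Elem L g" and j: "f l = g 0"
  shows "repr Elem (l + L) (\<lambda>t. if t \<le> l then f t else g (t - l))"
proof -
  obtain w1 \<theta>1 where w1: "w1 \<noteq> []" "wcomp w1" "set w1 \<subseteq> Elem" and c1: "continuous_on {0..l} \<theta>1"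
    and m1: "mono_on {0..l} \<theta>1" and i1: "\<theta>1 ` {0..l} \<subseteq> {0..real (length w1)}"
    and v1: "\<forall>t\<in>{0..l}. f t = wp w1 (\<theta>1 t)" using rf unfolding repr_def by blast
  obtain w2 \<theta>2 where w2: "w2 \<noteq> []" "wcomp w2" "set w2 \<subseteq> Elem" and c2: "continuous_on {0..L} \<theta>2"
    and m2: "mono_on {0..L} \<theta>2" and i2: "\<theta>2 ` {0..L} \<subseteq> {0..real (length w2)}"
    and v2: "\<forall>t\<in>{0..L}. g t = wp w2 (\<theta>2 t)" using rg unfolding repr_def by blast
  define s1 where "s1 = \<theta>1 l"
  define s2 where "s2 = \<theta>2 0"
  have "l \<in> {0..l}" "0 \<in> {0..L}" using l L by auto
  then have "s1 \<in> {0..real (length w1)}" "s2 \<in> {0..real (length w2)}" using i1 i2 unfolding s1_def s2_def by blast+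
  then have s1r: "0 \<le> s1" "s1 \<le> real (length w1)" and s2r: "0 \<le> s2" "s2 \<le> real (length w2)" by auto
  have x: "wp w1 s1 = wp w2 s2" using v1 v2 j l L unfolding s1_def s2_def by auto
  show ?thesis
  proof (cases "s1 = 0")
    case True
    define \<theta> where "\<theta> = (\<lambda>t. if t \<le> l then (\<lambda>_. s2) t else \<theta>2 (t - l))"
    have z: "\<And>t. t \<in> {0..l} \<Longrightarrow> \<theta>1 t = 0"
    proof -
      fix t assume t: "t \<in> {0..l}"
      have "\<theta>1 t \<le> \<theta>1 l" using mono_onD[OF m1 t] t l by auto
      moreover have "\<theta>1 t \<in> {0..real (length w1)}" using i1 t by blast
      then have "\<theta>1 t \<ge> 0" by simp
      ultimately show "\<theta>1 t = 0" using True s1_def by simp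
    qed
    have "continuous_on {0..l+L} \<theta>" unfolding \<theta>_def
      by (rule cont_paste[OF _ c2]) (auto simp: s2_def l less_imp_le)
    moreover have "mono_on {0..l+L} \<theta>" unfolding \<theta>_def
      by (rule mono_paste[OF _ m2]) (auto simp: s2_def l less_imp_le intro: mono_onI)
    moreover have "\<theta> ` {0..l+L} \<subseteq> {0..real (length w2)}"
    proof
      fix y assume "y \<in> \<theta> ` {0..l+L}"
      then obtain t where t: "t \<in> {0..l+L}" "y = \<theta> t" by auto
      show "y \<in> {0..real (length w2)}"
      proof (cases "t \<le> l")
        case True then show ?thesis using s2r t unfolding \<theta>_def by auto
      next
        case False
        then have "t - l \<in> {0..L}" using t by auto
        then have "\<theta>2 (t - l) \<in> {0..real (length w2)}" using i2 by blast
        then show ?thesis using False t unfolding \<theta>_def by auto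
      qed
    qed
    moreover have "\<forall>t\<in>{0..l+L}. (if t \<le> l then f t else g (t - l)) = wp w2 (\<theta> t)"
    proof
      fix t assume t: "t \<in> {0..l+L}"
      show "(if t \<le> l then f t else g (t - l)) = wp w2 (\<theta> t)"
      proof (cases "t \<le> l")
        case True
        then have "f t = wp w1 0" using v1 z t by auto
        also have "\<dots> = wp w2 s2" using x True s1_def \<open>s1 = 0\<close> by simp
        finally show ?thesis using True unfolding \<theta>_def by simp
      next
        case False
        then show ?thesis using v2 t unfolding \<theta>_def by auto
      qed
    qed
    ultimately show ?thesis unfolding repr_def using w2 by blast
  next
    case False
    then have s1p: "s1 > 0" using s1r by simp
    obtain j1 j2 where j1: "1 \<le> j1" "j1 \<le> length w1" and j2: "j2 \<le> length w2"
      and d: "\<theta>1 l - real j1 = \<theta>2 0 - real j2" and s1le: "\<theta>1 l \<le> real j1"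
      and xx: "wp w1 (real j1) = wp w2 (real j2)"
      and alt: "\<theta>1 l = real j1 \<or> (1 \<le> j2 \<and> real j1 - 1 < \<theta>1 l \<and> w1 ! (j1 - 1) = w2 ! (j2 - 1))"
    proof -
      consider (i) k1 where "k1 \<le> length w1" "s1 = real k1"
        | (n) j1 where "1 \<le> j1" "j1 \<le> length w1" "real j1 - 1 < s1" "s1 < real j1"
        using frac_split[OF s1r] by blast
      then show ?thesis
      proof cases
        case i
        have k1: "1 \<le> k1" using i s1p by (cases k1) auto
        have xs: "wp w1 s1 \<in> S0" using wp_S0[OF w1(1) w1(3) i(1)] i by simp
        consider (i2) k2 where "k2 \<le> length w2" "s2 = real k2"
          | (n2) j2 where "1 \<le> j2" "j2 \<le> length w2" "real j2 - 1 < s2" "s2 < real j2"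
          using frac_split[OF s2r] by blast
        then show ?thesis
        proof cases
          case i2
          show ?thesis
            by (rule that[of k1 k2]) (use k1 i i2 x s1_def s2_def in auto)
        next
          case n2
          then have "wp w2 s2 \<notin> S0" using wp_nonint[OF w2(3)] by blast
          then show ?thesis using xs x by simp
        qed
      next
        case n
        have nw1: "wp w1 s1 = (w1 ! (j1 - 1)) (s1 - real j1 + 1)" "wp w1 s1 \<notin> S0" "w1 ! (j1 - 1) \<in> Elem"
          using wp_nonint[OF w1(3) n] by auto
        consider (i2) k2 where "k2 \<le> length w2" "s2 = real k2"
          | (n2) j2 where "1 \<le> j2" "j2 \<le> length w2" "real j2 - 1 < s2" "s2 < real j2"
          using frac_split[OF s2r] by blast
        then show ?thesis
        proof cases
          case i2
          then have "wp w2 s2 \<in> S0" using wp_S0[OF w2(1) w2(3) i2(1)] by simp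
          then show ?thesis using nw1 x by simp
        next
          case n2
          have nw2: "wp w2 s2 = (w2 ! (j2 - 1)) (s2 - real j2 + 1)" "w2 ! (j2 - 1) \<in> Elem"
            using wp_nonint[OF w2(3) n2] by auto
          have "w1 ! (j1 - 1) = w2 ! (j2 - 1) \<and> s1 - real j1 + 1 = s2 - real j2 + 1"
            by (rule Elem_inj[OF nw1(3) nw2(2)]) (use n n2 nw1 nw2 x in auto)
          then have eqc: "w1 ! (j1 - 1) = w2 ! (j2 - 1)" and eqs: "s1 - real j1 = s2 - real j2" by auto
          have "wp w1 (real j1) = (w1 ! (j1 - 1)) 1" using wp_int[OF n(1,2)] .
          also have "\<dots> = (w2 ! (j2 - 1)) 1" using eqc by simp
          also have "\<dots> = wp w2 (real j2)" using wp_int[OF n2(1,2)] by simp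
          finally have xx: "wp w1 (real j1) = wp w2 (real j2)" .
          show ?thesis
            by (rule that[of j1 j2]) (use n n2 eqc eqs xx s1_def s2_def in auto)
        qed
      qed
    qed
    define w where "w = take j1 w1 @ drop j2 w2"
    define \<theta> where "\<theta> = (\<lambda>t. if t \<le> l then \<theta>1 t else \<theta>2 (t - l) + (real j1 - real j2))"
    have G: "w \<noteq> [] \<and> wcomp w \<and> set w \<subseteq> set w1 \<union> set w2 \<and> continuous_on {0..l+L} \<theta> \<and> mono_on {0..l+L} \<theta>
      \<and> \<theta> ` {0..l+L} \<subseteq> {0..real (length w)}
      \<and> (\<forall>t\<in>{0..l+L}. wp w (\<theta> t) = (if t \<le> l then wp w1 (\<theta>1 t) else wp w2 (\<theta>2 (t - l))))"
      unfolding w_def \<theta>_def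
      by (rule splice_gen[OF l less_imp_le[OF L] w1(1,2) w2(1,2) c1 m1 i1 c2 m2 i2 j1 j2 d s1le xx alt])
    have "\<forall>t\<in>{0..l+L}. (if t \<le> l then f t else g (t - l)) = wp w (\<theta> t)"
    proof
      fix t assume t: "t \<in> {0..l+L}"
      show "(if t \<le> l then f t else g (t - l)) = wp w (\<theta> t)"
      proof (cases "t \<le> l")
        case True then show ?thesis using G t v1 by auto
      next
        case False then show ?thesis using G t v2 by auto
      qed
    qed
    moreover have "set w \<subseteq> Elem" using G w1 w2 by blast
    ultimately show ?thesis unfolding repr_def using G by blast
  qed
qed

end


context ctow
begin

lemma piece: "\<gamma> \<in> mds_paths (X lam) \<Longrightarrow> \<phi> \<in> Irep 1 \<Longrightarrow> l > 0 \<Longrightarrow> repr Elem l (\<lambda>t. \<gamma> (\<phi> (t / l)))"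
proof -
  assume g: "\<gamma> \<in> mds_paths (X lam)" and ph: "\<phi> \<in> Irep 1" and l: "l > 0"
  have "rep Elem \<gamma>" using paths_rep[OF order.refl g] .
  then obtain w \<Gamma> where w: "w \<noteq> []" "wcomp w" "set w \<subseteq> Elem" and G: "\<Gamma> \<in> Mrep 1 (real (length w))"
     and v: "\<forall>t\<in>{0..1}. \<gamma> t = wp w (\<Gamma> t)" unfolding rep_def by blast
  have gc: "continuous_on {0..1} \<Gamma>" and gm: "mono_on {0..1} \<Gamma>" and gi: "\<Gamma> ` {0..1} = {0..real (length w)}"
    using G unfolding Mrep_def by auto
  have pc: "continuous_on {0..1} \<phi>" and pm: "mono_on {0..1} \<phi>" and pi: "\<phi> ` {0..1} \<subseteq> {0..1}"
    using ph unfolding Irep_def by auto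
  have sc: "(\<lambda>t. t / l) ` {0..l} \<subseteq> {0..1}" using l by auto
  define \<theta> where "\<theta> = (\<lambda>t. \<Gamma> (\<phi> (t / l)))"
  have c1: "continuous_on {0..l} (\<lambda>t. \<phi> (t / l))"
    by (rule continuous_on_compose2[OF pc _ sc]) (intro continuous_intros, use l in auto)
  have "continuous_on {0..l} \<theta>" unfolding \<theta>_def
    by (rule continuous_on_compose2[OF gc c1]) (use sc pi in auto)
  moreover have "mono_on {0..l} \<theta>"
  proof (rule mono_onI)
    fix r s assume rs: "r \<in> {0..l}" "s \<in> {0..l}" "r \<le> s"
    then have a: "r / l \<in> {0..1}" "s / l \<in> {0..1}" "r / l \<le> s / l" using l by (auto simp: divide_right_mono)
    then have "\<phi> (r / l) \<le> \<phi> (s / l)" using mono_onD[OF pm] by blast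
    moreover have "\<phi> (r / l) \<in> {0..1}" "\<phi> (s / l) \<in> {0..1}" using pi a by blast+
    ultimately show "\<theta> r \<le> \<theta> s" unfolding \<theta>_def using mono_onD[OF gm] by blast
  qed
  moreover have "\<theta> ` {0..l} \<subseteq> {0..real (length w)}"
  proof
    fix y assume "y \<in> \<theta> ` {0..l}"
    then obtain t where t: "t \<in> {0..l}" "y = \<theta> t" by auto
    then have "\<phi> (t / l) \<in> {0..1}" using sc pi by blast
    then show "y \<in> {0..real (length w)}" using gi t unfolding \<theta>_def by blast
  qed
  moreover have "\<forall>t\<in>{0..l}. \<gamma> (\<phi> (t / l)) = wp w (\<theta> t)"
  proof
    fix t assume t: "t \<in> {0..l}"
    then have "\<phi> (t / l) \<in> {0..1}" using sc pi by blast
    then show "\<gamma> (\<phi> (t / l)) = wp w (\<theta> t)" using v unfolding \<theta>_def by blast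
  qed
  ultimately show ?thesis unfolding repr_def using w by blast
qed

lemma moore_repr: "M \<noteq> [] \<Longrightarrow> moore_composable M \<Longrightarrow> \<forall>(l, f)\<in>set M. l > 0 \<and> repr Elem l f \<Longrightarrow>
  repr Elem (sum_list (map fst M)) (moore M)"
proof (induction M)
  case Nil then show ?case by simp
next
  case (Cons a M')
  obtain l f where a: "a = (l, f)" by fastforce
  have lf: "l > 0" "repr Elem l f" using Cons.prems a by auto
  show ?case
  proof (cases "M' = []")
    case True
    then show ?thesis using a lf by (simp add: fun_eq_iff)
  next
    case False
    then obtain l' g rest where M': "M' = (l', g) # rest" by (metis list.exhaust prod.exhaust)
    have comp: "f l = g 0" "moore_composable M'" using Cons.prems(2) a M' by auto
    have l': "l' > 0" using Cons.prems(3) M' by auto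
    have m0: "moore M' 0 = g 0" using M' l' by (cases rest) auto
    have IH: "repr Elem (sum_list (map fst M')) (moore M')"
      using Cons.IH[OF False comp(2)] Cons.prems(3) by auto
    have pos: "sum_list (map fst M') > 0"
      by (rule sum_pos[OF False]) (use Cons.prems(3) in auto)
    have "repr Elem (l + sum_list (map fst M')) (\<lambda>t. if t \<le> l then f t else moore M' (t - l))"
      by (rule splice[OF lf(1) pos lf(2) IH]) (use comp m0 in simp)
    moreover have "moore (a # M') = (\<lambda>t. if t \<le> l then f t else moore M' (t - l))"
      using a M' by (simp add: fun_eq_iff)
    ultimately show ?thesis using a by simp
  qed
qed

lemma main_fwd:
  assumes sp: "sp_dpath (X lam) p"
  shows "\<exists>\<gamma> \<phi>. (\<gamma> \<in> mds_paths (X lam) \<or> (\<exists>x\<in>topspace (mds_top (X lam)). \<forall>t. \<gamma> t = x))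
          \<and> \<phi> \<in> Irep 1 \<and> (\<forall>t\<in>{0..1}. p t = \<gamma> (\<phi> t))"
proof -
  have idI: "(\<lambda>t. t) \<in> Irep 1" unfolding Irep_def by (auto intro: continuous_on_id mono_onI)
  consider (c) x where "x \<in> topspace (mds_top (X lam))" "\<forall>t\<in>{0..1}. p t = x"
    | (L) L where "L \<noteq> []" "\<forall>(l, \<gamma>, \<phi>)\<in>set L. l > 0 \<and> \<gamma> \<in> mds_paths (X lam) \<and> \<phi> \<in> Irep 1"
        "sum_list (map fst L) = 1"
        "moore_composable (map (\<lambda>(l, \<gamma>, \<phi>). (l, \<lambda>t. \<gamma> (\<phi> (t / l)))) L)"
        "\<forall>t\<in>{0..1}. p t = moore (map (\<lambda>(l, \<gamma>, \<phi>). (l, \<lambda>t. \<gamma> (\<phi> (t / l)))) L) t"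
    using sp unfolding sp_dpath_def by blast
  then show ?thesis
  proof cases
    case c
    show ?thesis
      by (rule exI[of _ "\<lambda>t. x"], rule exI[of _ "\<lambda>t. t"]) (use c idI in auto)
  next
    case L
    define M where "M = map (\<lambda>(l, \<gamma>, \<phi>). (l, \<lambda>t. \<gamma> (\<phi> (t / l)))) L"
    have fM: "map fst M = map fst L" unfolding M_def by (induction L) auto
    have "\<forall>(l, f)\<in>set M. l > 0 \<and> repr Elem l f"
      unfolding M_def using L(2) piece by fastforce
    moreover have "M \<noteq> []" using L(1) M_def by simp
    ultimately have "repr Elem (sum_list (map fst M)) (moore M)"
      using moore_repr L(4) M_def by blast
    then have "repr Elem 1 (moore M)" using fM L(3) by simp
    then obtain w \<theta> where w: "w \<noteq> []" "wcomp w" "set w \<subseteq> Elem" and c: "continuous_on {0..1} \<theta>"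
      and m: "mono_on {0..1} \<theta>" and i: "\<theta> ` {0..1} \<subseteq> {0..real (length w)}"
      and v: "\<forall>t\<in>{0..1}. moore M t = wp w (\<theta> t)" unfolding repr_def by blast
    obtain \<gamma> where g: "\<gamma> \<in> mds_paths (X lam)" and gv: "\<forall>t\<in>{0..1}. \<gamma> t = wp w (real (length w) * t)"
      using word_path[OF w] by blast
    define m where "m = real (length w)"
    have mp: "m > 0" using w m_def by simp
    define \<phi> where "\<phi> = (\<lambda>t. \<theta> t / m)"
    have "\<phi> \<in> Irep 1" unfolding Irep_def
    proof (intro CollectI conjI)
      show "continuous_on {0..1} \<phi>" unfolding \<phi>_def using c by (intro continuous_intros) (use mp in auto)
      show "mono_on {0..1} \<phi>" unfolding \<phi>_def
        by (rule mono_onI) (use mono_onD[OF m] mp in \<open>auto simp: divide_right_mono\<close>)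
      show "\<phi> ` {0..1} \<subseteq> {0..1}"
      proof
        fix y assume "y \<in> \<phi> ` {0..1}"
        then obtain t where t: "t \<in> {0..1}" "y = \<phi> t" by auto
        then have "\<theta> t \<in> {0..m}" using i m_def by blast
        then show "y \<in> {0..1}" using t mp unfolding \<phi>_def by auto
      qed
    qed
    moreover have "\<forall>t\<in>{0..1}. p t = \<gamma> (\<phi> t)"
    proof
      fix t :: real assume t: "t \<in> {0..1}"
      then have "\<theta> t \<in> {0..m}" using i m_def by blast
      then have pt: "\<phi> t \<in> {0..1}" using mp unfolding \<phi>_def by auto
      have "p t = moore M t" using L(5) t M_def by simp
      also have "\<dots> = wp w (\<theta> t)" using v t by simp
      also have "\<theta> t = m * \<phi> t" unfolding \<phi>_def using mp by simp
      also have "wp w (m * \<phi> t) = \<gamma> (\<phi> t)" using gv pt m_def by simp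
      finally show "p t = \<gamma> (\<phi> t)" .
    qed
    ultimately show ?thesis using g by blast
  qed
qed

end

theorem theorem4p9:
  fixes S0 :: "'a set" and X :: "'i::wellorder \<Rightarrow> 'a mdspace" and lam :: 'i
    and p :: "real \<Rightarrow> 'a"
  assumes "cellular_tower S0 X lam"
    and "continuous_map (top_of_set {0..1}) (mds_top (X lam)) p"
  shows "sp_dpath (X lam) p \<longleftrightarrow>
    (\<exists>\<gamma> \<phi>. (\<gamma> \<in> mds_paths (X lam) \<or> (\<exists>x\<in>topspace (mds_top (X lam)). \<forall>t. \<gamma> t = x))
          \<and> \<phi> \<in> Irep 1 \<and> (\<forall>t\<in>{0..1}. p t = \<gamma> (\<phi> t)))"
proof
  interpret T: ctow S0 X lam by (rule ctow.intro[OF assms(1)])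
  assume "sp_dpath (X lam) p"
  then show "\<exists>\<gamma> \<phi>. (\<gamma> \<in> mds_paths (X lam) \<or> (\<exists>x\<in>topspace (mds_top (X lam)). \<forall>t. \<gamma> t = x))
          \<and> \<phi> \<in> Irep 1 \<and> (\<forall>t\<in>{0..1}. p t = \<gamma> (\<phi> t))" by (rule T.main_fwd)
next
  assume "\<exists>\<gamma> \<phi>. (\<gamma> \<in> mds_paths (X lam) \<or> (\<exists>x\<in>topspace (mds_top (X lam)). \<forall>t. \<gamma> t = x))
          \<and> \<phi> \<in> Irep 1 \<and> (\<forall>t\<in>{0..1}. p t = \<gamma> (\<phi> t))"
  then obtain \<gamma> \<phi> where g: "\<gamma> \<in> mds_paths (X lam) \<or> (\<exists>x\<in>topspace (mds_top (X lam)). \<forall>t. \<gamma> t = x)"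
    and ph: "\<phi> \<in> Irep 1" and v: "\<forall>t\<in>{0..1}. p t = \<gamma> (\<phi> t)" by blast
  from g show "sp_dpath (X lam) p"
  proof
    assume gp: "\<gamma> \<in> mds_paths (X lam)"
    let ?L = "[(1::real, \<gamma>, \<phi>)]"
    have "?L \<noteq> [] \<and> (\<forall>(l, \<gamma>, \<phi>)\<in>set ?L. l > 0 \<and> \<gamma> \<in> mds_paths (X lam) \<and> \<phi> \<in> Irep 1)
      \<and> sum_list (map fst ?L) = 1
      \<and> moore_composable (map (\<lambda>(l, \<gamma>, \<phi>). (l, \<lambda>t. \<gamma> (\<phi> (t / l)))) ?L)
      \<and> (\<forall>t\<in>{0..1}. p t = moore (map (\<lambda>(l, \<gamma>, \<phi>). (l, \<lambda>t. \<gamma> (\<phi> (t / l)))) ?L) t)"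
      using gp ph v by simp
    then show ?thesis unfolding sp_dpath_def by blast
  next
    assume "\<exists>x\<in>topspace (mds_top (X lam)). \<forall>t. \<gamma> t = x"
    then obtain x where "x \<in> topspace (mds_top (X lam))" "\<forall>t. \<gamma> t = x" by blast
    then show ?thesis unfolding sp_dpath_def using v by auto
  qed
qed

end
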